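(* $z_{\mathrm{LC}}=z_D$, where $$z_{\mathrm{LC}}:=\inf\Big\{c^Tx+\sum_{s\in S}p_s\theta_s:\ (x,\theta_s)\in P_s(\mathbb{R}^n\times\mathbb{R}_+)\ \text{for all } s\in S\Big\}$$ (the infimum being over $x\in\mathbb{R}^n$ and $(\theta_s)_{s\in S}\in\mathbb{R}^S$), and $$z_D:=\sup\Big\{z(\lambda):\ \lambda=(\lambda^s)_{s\in S}\in(\mathbb{R}^n)^S,\ \sum_{s\in S}p_s\lambda^s=0\Big\},\qquad z(\lambda):=\sum_{s\in S}p_s\min_{(x^s,y^s)\in K^s}\big\{c^Tx^s+(q^s)^Ty^s+(\lambda^s)^Tx^s\big\}.$$
   Context: Two-stage stochastic integer program with finite scenario set $S$ and probabilities $p_s>0$, $\sum_{s\in S}p_s=1$. Data: $c\in\mathbb{R}^n$, matrix $A$ and vector $b$, and for each $s\in S$ matrices $T^s,W^s$ and vectors $h^s,q^s$ (all data rational). $X=\{x\in\mathbb{R}^n: x_j\in\mathbb{Z},\ j\in J_X\}$ and $Y=\{y\in\mathbb{R}^{n_y}: y_j\in\mathbb{Z},\ j\in J_Y\}$ for given index sets $J_X,J_Y$. For each $s$, $K^s:=\{(x,y)\in X\times Y: Ax\ge b,\ T^sx+W^sy\ge h^s\}$, assumed nonempty and bounded. Define $\overline{Q}_s^*:\mathbb{R}^n\times\mathbb{R}_+\to\mathbb{R}$ by $\overline{Q}_s^*(\pi,\pi_0)=\min\{\pi^Tx+\pi_0(q^s)^Ty:(x,y)\in K^s\}$. For $\Pi\subseteq\mathbb{R}^n\times\mathbb{R}_+$,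 $P_s(\Pi):=\{(x,\theta_s)\in\mathbb{R}^n\times\mathbb{R}:\ \pi^Tx+\pi_0\theta_s\ge\overline{Q}_s^*(\pi,\pi_0)\text{ for all }(\pi,\pi_0)\in\Pi\}$. *)

theory Defs
  imports "HOL-Analysis.Analysis"
begin

definition intpart :: "'i set \<Rightarrow> (real^'i) set" where
  "intpart J = {x. \<forall>j\<in>J. x $ j \<in> \<int>}"

text \<open>K^s: first-stage constraints A x >= b (rows indexed by type 'm),
  second-stage constraints T^s x + W^s y >= h^s with ms s rows (row i given by T s i, W s i, h s i).\<close>
definition Kset ::
  "real^'n^'m \<Rightarrow> real^'m \<Rightarrow> ('s \<Rightarrow> nat \<Rightarrow> real^'n) \<Rightarrow> ('s \<Rightarrow> nat \<Rightarrow> real^'ny)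
   \<Rightarrow> ('s \<Rightarrow> nat \<Rightarrow> real) \<Rightarrow> ('s \<Rightarrow> nat) \<Rightarrow> 'n set \<Rightarrow> 'ny set \<Rightarrow> 's
   \<Rightarrow> ((real^'n) \<times> (real^'ny)) set" where
  "Kset A b T W h ms JX JY s =
     {(x, y). x \<in> intpart JX \<and> y \<in> intpart JY \<and>
              (\<forall>i. b $ i \<le> (A *v x) $ i) \<and>
              (\<forall>i<ms s. h s i \<le> T s i \<bullet> x + W s i \<bullet> y)}"

definition Qstar ::
  "('s \<Rightarrow> ((real^'n) \<times> (real^'ny)) set) \<Rightarrow> ('s \<Rightarrow> real^'ny) \<Rightarrow> 's \<Rightarrow> real^'n \<Rightarrow> real \<Rightarrow> real" where
  "Qstar K q s \<pi> \<pi>0 = Inf ((\<lambda>(x, y). \<pi> \<bullet> x + \<pi>0 * (q s \<bullet> y)) ` K s)"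

definition Pset ::
  "('s \<Rightarrow> ((real^'n) \<times> (real^'ny)) set) \<Rightarrow> ('s \<Rightarrow> real^'ny) \<Rightarrow> 's \<Rightarrow> ((real^'n) \<times> real) set
   \<Rightarrow> ((real^'n) \<times> real) set" where
  "Pset K q s Pis = {(x, \<theta>). \<forall>(\<pi>, \<pi>0) \<in> Pis. Qstar K q s \<pi> \<pi>0 \<le> \<pi> \<bullet> x + \<pi>0 * \<theta>}"

definition zLC ::
  "real^'n \<Rightarrow> ('s \<Rightarrow> real) \<Rightarrow> 's set \<Rightarrow> ('s \<Rightarrow> ((real^'n) \<times> (real^'ny)) set) \<Rightarrow> ('s \<Rightarrow> real^'ny) \<Rightarrow> ereal" where
  "zLC c p S K q =
     (INF z \<in> {(x, \<theta>). \<forall>s\<in>S. (x, \<theta> s) \<in> Pset K q s (UNIV \<times> {0..})}.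
        ereal (c \<bullet> fst z + (\<Sum>s\<in>S. p s * snd z s)))"

definition zlam ::
  "real^'n \<Rightarrow> ('s \<Rightarrow> real) \<Rightarrow> 's set \<Rightarrow> ('s \<Rightarrow> ((real^'n) \<times> (real^'ny)) set) \<Rightarrow> ('s \<Rightarrow> real^'ny)
   \<Rightarrow> ('s \<Rightarrow> real^'n) \<Rightarrow> real" where
  "zlam c p S K q lam =
     (\<Sum>s\<in>S. p s * Inf ((\<lambda>(x, y). c \<bullet> x + q s \<bullet> y + lam s \<bullet> x) ` K s))"

definition zD ::
  "real^'n \<Rightarrow> ('s \<Rightarrow> real) \<Rightarrow> 's set \<Rightarrow> ('s \<Rightarrow> ((real^'n) \<times> (real^'ny)) set) \<Rightarrow> ('s \<Rightarrow> real^'ny) \<Rightarrow> ereal" where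
  "zD c p S K q =
     (SUP lam \<in> {lam. (\<Sum>s\<in>S. p s *\<^sub>R lam s) = 0}. ereal (zlam c p S K q lam))"

end

theory Submission
  imports Defs
begin

definition gf :: "real^'n \<Rightarrow> ((real^'n) \<times> real) \<Rightarrow> real" where
  "gf \<nu> z = \<nu> \<bullet> fst z + snd z"
definition Hs :: "((real^'n) \<times> real) set \<Rightarrow> real^'n \<Rightarrow> ereal" where
  "Hs E \<nu> = (INF z\<in>E. ereal (gf \<nu> z))"
definition hs :: "((real^'n) \<times> real) set \<Rightarrow> real^'n \<Rightarrow> real" where
  "hs E \<nu> = Inf (gf \<nu> ` E)"
definition comb :: "((real^'n) \<times> real) set \<Rightarrow> ((real^'n) \<times> real) set \<Rightarrow> ((real^'n) \<times> real) set" where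
  "comb E F = {(x, t + t') | x t t'. (x,t)\<in>E \<and> (x,t')\<in>F}"
definition Comb :: "'s set \<Rightarrow> ('s \<Rightarrow> ((real^'n) \<times> real) set) \<Rightarrow> ((real^'n) \<times> real) set" where
  "Comb S E = {(x, \<Sum>s\<in>S. t s) | x t. \<forall>s\<in>S. (x, t s) \<in> E s}"

lemma gf_inner: "gf \<nu> z = inner (\<nu>, 1::real) z"
  by (simp add: gf_def inner_prod_def)

lemma gf_cont: "continuous_on X (gf \<nu>)"
  unfolding gf_def by (intro continuous_intros)

lemma attain:
  assumes "compact E" "E \<noteq> {}"
  obtains z where "z \<in> E" "\<And>w. w \<in> E \<Longrightarrow> gf \<nu> z \<le> gf \<nu> w"
  using continuous_attains_inf[OF assms gf_cont] by blast

lemma hs_attain: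
  assumes "z \<in> E" "\<And>w. w \<in> E \<Longrightarrow> gf \<nu> z \<le> gf \<nu> w"
  shows "hs E \<nu> = gf \<nu> z"
  unfolding hs_def by (rule cInf_eq_minimum) (use assms in auto)

lemma hs_lower:
  assumes "compact E" "z \<in> E"
  shows "hs E \<nu> \<le> gf \<nu> z"
proof -
  obtain z0 where "z0 \<in> E" "\<And>w. w \<in> E \<Longrightarrow> gf \<nu> z0 \<le> gf \<nu> w"
    using attain[OF assms(1), of \<nu>] assms(2) by blast
  then show ?thesis using hs_attain assms(2) by metis
qed

lemma Hs_hs:
  assumes "compact E" "E \<noteq> {}"
  shows "Hs E \<nu> = ereal (hs E \<nu>)"
proof -
  obtain z0 where z0: "z0 \<in> E" "\<And>w. w \<in> E \<Longrightarrow> gf \<nu> z0 \<le> gf \<nu> w"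
    using attain[OF assms, of \<nu>] by blast
  have "Hs E \<nu> = ereal (gf \<nu> z0)"
    unfolding Hs_def
    by (rule antisym) (auto intro!: INF_lower2[OF z0(1)] INF_greatest simp: z0(2))
  then show ?thesis using hs_attain[OF z0] by simp
qed


lemma comb_compact:
  assumes "compact E" "compact F"
  shows "compact (comb E F)"
proof -
  let ?f = "\<lambda>zw::((real^'n) \<times> real) \<times> ((real^'n) \<times> real). (fst (fst zw), snd (fst zw) + snd (snd zw))"
  let ?X = "(E \<times> F) \<inter> {zw. fst (fst zw) = fst (snd zw)}"
  have "comb E F = ?f ` ?X"
  proof
    show "comb E F \<subseteq> ?f ` ?X"
    proof
      fix z assume "z \<in> comb E F"
      then obtain x t t' where "z = (x, t+t')" "(x,t)\<in>E" "(x,t')\<in>F" unfolding comb_def by blast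
      then show "z \<in> ?f ` ?X" by (intro image_eqI[of _ _ "((x,t),(x,t'))"]) auto
    qed
    show "?f ` ?X \<subseteq> comb E F"
    proof
      fix z assume "z \<in> ?f ` ?X"
      then obtain a b where "a \<in> E" "b \<in> F" "fst a = fst b" "z = ?f (a,b)" by auto
      then show "z \<in> comb E F"
      proof -
        have "z = (fst a, snd a + snd b)" using \<open>z = ?f (a,b)\<close> by simp
        moreover have "(fst a, snd a) \<in> E" using \<open>a \<in> E\<close> by simp
        moreover have "(fst a, snd b) \<in> F" using \<open>b \<in> F\<close> \<open>fst a = fst b\<close> by (metis prod.collapse)
        ultimately show ?thesis unfolding comb_def by blast
      qed
    qed
  qed
  moreover have "compact ?X"
    by (intro compact_Int_closed compact_Times assms closed_Collect_eq continuous_intros)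
  moreover have "continuous_on ?X ?f" by (intro continuous_intros)
  ultimately show ?thesis using compact_continuous_image[of ?X ?f] by simp
qed

lemma comb_convex:
  assumes "convex E" "convex F"
  shows "convex (comb E F)"
  unfolding convex_def
proof (intro ballI allI impI)
  fix z w and u v :: real
  assume "z \<in> comb E F" "w \<in> comb E F" "0 \<le> u" "0 \<le> v" "u + v = 1"
  then obtain x t t' y s s' where z: "z = (x, t+t')" "(x,t)\<in>E" "(x,t')\<in>F"
     and w: "w = (y, s+s')" "(y,s)\<in>E" "(y,s')\<in>F" and uv: "0 \<le> u" "0 \<le> v" "u + v = 1"
    unfolding comb_def by blast
  have "u *\<^sub>R (x,t) + v *\<^sub>R (y,s) \<in> E" using assms(1) z w uv by (intro convexD) auto
  then have 1: "(u *\<^sub>R x + v *\<^sub>R y, u * t + v * s) \<in> E" by simp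
  have "u *\<^sub>R (x,t') + v *\<^sub>R (y,s') \<in> F" using assms(2) z w uv by (intro convexD) auto
  then have 2: "(u *\<^sub>R x + v *\<^sub>R y, u * t' + v * s') \<in> F" by simp
  have 3: "u *\<^sub>R z + v *\<^sub>R w = (u *\<^sub>R x + v *\<^sub>R y, (u * t + v * s) + (u * t' + v * s'))"
    unfolding z w by (simp add: algebra_simps)
  show "u *\<^sub>R z + v *\<^sub>R w \<in> comb E F"
    unfolding 3 comb_def using 1 2 by blast
qed

lemma Comb_mem: "z \<in> Comb S E \<longleftrightarrow> (\<exists>x t. z = (x, sum t S) \<and> (\<forall>s\<in>S. (x, t s) \<in> E s))"
  unfolding Comb_def by (rule mem_Collect_eq)

lemma comb_mem: "z \<in> comb E F \<longleftrightarrow> (\<exists>x t t'. z = (x, t + t') \<and> (x,t)\<in>E \<and> (x,t')\<in>F)"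
  unfolding comb_def by (rule mem_Collect_eq)

lemma Comb_insert:
  assumes "a \<notin> S" "finite S"
  shows "Comb (insert a S) E = comb (E a) (Comb S E)"
proof
  show "Comb (insert a S) E \<subseteq> comb (E a) (Comb S E)"
  proof
    fix z assume "z \<in> Comb (insert a S) E"
    then obtain x t where z: "z = (x, \<Sum>s\<in>insert a S. t s)" "\<forall>s\<in>insert a S. (x, t s) \<in> E s"
      unfolding Comb_mem by blast
    have 1: "(x, \<Sum>s\<in>S. t s) \<in> Comb S E" unfolding Comb_mem using z(2) by blast
    have 2: "z = (x, t a + (\<Sum>s\<in>S. t s))" using z(1) assms by simp
    have 3: "(x, t a) \<in> E a" using z(2) by simp
    show "z \<in> comb (E a) (Comb S E)" unfolding comb_mem using 1 2 3 by blast
  qed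
  show "comb (E a) (Comb S E) \<subseteq> Comb (insert a S) E"
  proof
    fix z assume "z \<in> comb (E a) (Comb S E)"
    then obtain x t1 t2 where z0: "z = (x, t1 + t2)" "(x,t1) \<in> E a" "(x,t2) \<in> Comb S E"
      unfolding comb_mem by blast
    from z0(3) obtain x' t where xt: "(x, t2) = (x', \<Sum>s\<in>S. t s)" "\<forall>s\<in>S. (x', t s) \<in> E s"
      unfolding Comb_mem by blast
    then have z: "z = (x, t1 + (\<Sum>s\<in>S. t s))" "\<forall>s\<in>S. (x, t s) \<in> E s"
      using z0 by auto
    define t' where "t' = t(a := t1)"
    have 0: "(\<Sum>s\<in>S. t' s) = (\<Sum>s\<in>S. t s)"
      using assms(1) unfolding t'_def by (intro sum.cong) auto
    have 1: "(\<Sum>s\<in>insert a S. t' s) = t1 + (\<Sum>s\<in>S. t s)"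
      using assms 0 by (simp add: t'_def)
    have 2: "\<forall>s\<in>insert a S. (x, t' s) \<in> E s" using z z0(2) assms unfolding t'_def by auto
    show "z \<in> Comb (insert a S) E" unfolding Comb_mem
      using z(1) 1 2 by metis
  qed
qed

lemma Comb_single: "Comb {a} E = E a"
proof
  show "Comb {a} E \<subseteq> E a"
  proof
    fix z assume "z \<in> Comb {a} E"
    then obtain x t where "z = (x, sum t {a})" "\<forall>s\<in>{a}. (x, t s) \<in> E s" unfolding Comb_mem by blast
    then show "z \<in> E a" by simp
  qed
  show "E a \<subseteq> Comb {a} E"
  proof
    fix z assume "z \<in> E a"
    then show "z \<in> Comb {a} E" unfolding Comb_mem
      by (intro exI[of _ "fst z"] exI[of _ "\<lambda>_. snd z"]) auto
  qed
qed

lemma Comb_cc: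
  assumes "finite S" "S \<noteq> {}" "\<forall>s\<in>S. compact (E s) \<and> convex (E s)"
  shows "compact (Comb S E) \<and> convex (Comb S E)"
  using assms
proof (induction S rule: finite_ne_induct)
  case (singleton x)
  then show ?case by (simp add: Comb_single)
next
  case (insert x F)
  then show ?case by (simp add: Comb_insert comb_compact comb_convex)
qed


lemma two_fold:
  fixes E F :: "((real^'n) \<times> real) set"
  assumes cE: "compact E" "convex E" "E \<noteq> {}"
    and cF: "compact F" "convex F" "F \<noteq> {}"
    and r: "ereal r < Hs (comb E F) \<mu>"
  shows "\<exists>\<nu>. r < hs E \<nu> + hs F (\<mu> - \<nu>)"
proof -
  let ?f = "\<lambda>zw::((real^'n) \<times> real) \<times> ((real^'n) \<times> real).
              (fst (fst zw) - fst (snd zw), \<mu> \<bullet> fst (fst zw) + snd (fst zw) + snd (snd zw))"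
  define D where "D = ?f ` (E \<times> F)"
  have lin: "linear ?f"
    by (rule linearI) (auto simp: algebra_simps inner_add_right inner_scaleR_right)
  have cD: "compact D" unfolding D_def
    by (intro compact_continuous_image compact_Times cE cF continuous_intros)
  have vD: "convex D" unfolding D_def
    by (intro convex_linear_image lin convex_Times cE cF)
  define Q where "Q = {0::real^'n} \<times> {0::real..}"
  have cQ: "closed Q" unfolding Q_def by (intro closed_Times closed_singleton closed_atLeast)
  have vQ: "convex Q" unfolding Q_def by (intro convex_Times convex_singleton convex_real_interval)
  define D' where "D' = (\<Union>x\<in> Q. \<Union>y \<in> D. {x + y})"
  have cD': "closed D'" unfolding D'_def by (rule closed_compact_sums[OF cQ cD])
  have vD': "convex D'" unfolding D'_def by (rule convex_sums[OF vQ vD])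
  have z0: "(0, r) \<notin> D'"
  proof
    assume "(0, r) \<in> D'"
    then obtain x y where xy: "x \<in> Q" "y \<in> D" "(0, r) = x + y" unfolding D'_def by blast
    then obtain \<tau> where \<tau>: "x = (0, \<tau>)" "\<tau> \<ge> 0" unfolding Q_def by auto
    from xy(2) obtain u t u' t' where ut: "(u,t) \<in> E" "(u',t') \<in> F"
      "y = (u - u', \<mu> \<bullet> u + t + t')" unfolding D_def by auto
    have "u = u'" using xy(3) \<tau> ut(3) by simp
    then have "(u, t + t') \<in> comb E F" unfolding comb_mem using ut by blast
    then have "Hs (comb E F) \<mu> \<le> ereal (gf \<mu> (u, t + t'))" unfolding Hs_def by (rule INF_lower)
    moreover have "gf \<mu> (u, t + t') = r - \<tau>" using xy(3) \<tau> ut(3) by (simp add: gf_def)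
    moreover have "ereal (r - \<tau>) \<le> ereal r" using \<tau>(2) by simp
    ultimately show False using r by (metis order.trans not_less)
  qed
  obtain a \<beta> where ab: "inner a (0, r) < \<beta>" "\<forall>x\<in>D'. \<beta> < inner a x"
    using separating_hyperplane_closed_point[OF vD' cD' z0] by blast
  define a1 where "a1 = fst a"
  define \<alpha> where "\<alpha> = snd a"
  have key: "\<beta> < a1 \<bullet> (u - u') + \<alpha> * (\<mu> \<bullet> u + t + t' + \<tau>)"
    if "(u,t) \<in> E" "(u',t') \<in> F" "\<tau> \<ge> 0" for u t u' t' \<tau>
  proof -
    have "(0, \<tau>) + ?f ((u,t),(u',t')) \<in> D'"
      unfolding D'_def D_def Q_def using that by force
    then have "\<beta> < inner a ((0, \<tau>) + ?f ((u,t),(u',t')))" using ab(2) by blast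
    then show ?thesis by (simp add: inner_prod_def a1_def \<alpha>_def algebra_simps)
  qed
  have ar: "\<alpha> * r < \<beta>" using ab(1) by (simp add: inner_prod_def \<alpha>_def)
  obtain e0 where e0: "e0 \<in> E" using cE(3) by blast
  obtain f0 where f0: "f0 \<in> F" using cF(3) by blast
  have \<alpha>0: "\<alpha> \<ge> 0"
  proof (rule ccontr)
    assume "\<not> \<alpha> \<ge> 0"
    then have neg: "\<alpha> < 0" by simp
    define X where "X = a1 \<bullet> (fst e0 - fst f0) + \<alpha> * (\<mu> \<bullet> fst e0 + snd e0 + snd f0)"
    define \<tau> where "\<tau> = \<bar>X - \<beta>\<bar> / (- \<alpha>)"
    have "\<tau> \<ge> 0" unfolding \<tau>_def using neg by (simp add: divide_nonneg_neg)
    then have "\<beta> < X + \<alpha> * \<tau>"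
      using key[of "fst e0" "snd e0" "fst f0" "snd f0" \<tau>] e0 f0 unfolding X_def
      by (simp add: algebra_simps)
    moreover have "\<alpha> * \<tau> = - \<bar>X - \<beta>\<bar>" unfolding \<tau>_def using neg by simp
    ultimately show False by linarith
  qed
  show ?thesis
  proof (cases "\<alpha> = 0")
    case False
    then have ap: "\<alpha> > 0" using \<alpha>0 by simp
    define \<nu> where "\<nu> = \<mu> + (1/\<alpha>) *\<^sub>R a1"
    obtain ze where ze: "ze \<in> E" "\<And>w. w \<in> E \<Longrightarrow> gf \<nu> ze \<le> gf \<nu> w" using attain[OF cE(1,3)] by blast
    obtain zf where zf: "zf \<in> F" "\<And>w. w \<in> F \<Longrightarrow> gf (\<mu> - \<nu>) zf \<le> gf (\<mu> - \<nu>) w" using attain[OF cF(1,3)] by blast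
    have 1: "hs E \<nu> = gf \<nu> ze" by (rule hs_attain[OF ze])
    have 2: "hs F (\<mu> - \<nu>) = gf (\<mu> - \<nu>) zf" by (rule hs_attain[OF zf])
    have k: "\<beta> < a1 \<bullet> (fst ze - fst zf) + \<alpha> * (\<mu> \<bullet> fst ze + snd ze + snd zf)"
      using key[of "fst ze" "snd ze" "fst zf" "snd zf" 0] ze(1) zf(1) by simp
    have "gf \<nu> ze + gf (\<mu> - \<nu>) zf = (a1 \<bullet> (fst ze - fst zf)) / \<alpha> + (\<mu> \<bullet> fst ze + snd ze + snd zf)"
      unfolding gf_def \<nu>_def by (simp add: inner_add_left inner_diff_left inner_diff_right algebra_simps add_divide_distrib diff_divide_distrib)
    moreover have "r < (a1 \<bullet> (fst ze - fst zf)) / \<alpha> + (\<mu> \<bullet> fst ze + snd ze + snd zf)"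
    proof -
      have "\<alpha> * r < \<alpha> * ((a1 \<bullet> (fst ze - fst zf)) / \<alpha> + (\<mu> \<bullet> fst ze + snd ze + snd zf))"
      proof -
        have "\<alpha> * ((a1 \<bullet> (fst ze - fst zf)) / \<alpha> + (\<mu> \<bullet> fst ze + snd ze + snd zf))
              = a1 \<bullet> (fst ze - fst zf) + \<alpha> * (\<mu> \<bullet> fst ze + snd ze + snd zf)"
          using ap by (simp add: distrib_left)
        then show ?thesis using k ar by linarith
      qed
      then show ?thesis using ap by simp
    qed
    ultimately show ?thesis using 1 2 by metis
  next
    case True
    then have bp: "\<beta> > 0" using ar by simp
    define M where "M = hs E \<mu> + hs F 0"
    define k where "k = (\<bar>r - M\<bar> + 1) / \<beta>"
    have kp: "k > 0" unfolding k_def using bp by simp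
    define \<nu> where "\<nu> = \<mu> + k *\<^sub>R a1"
    obtain ze where ze: "ze \<in> E" "\<And>w. w \<in> E \<Longrightarrow> gf \<nu> ze \<le> gf \<nu> w" using attain[OF cE(1,3)] by blast
    obtain zf where zf: "zf \<in> F" "\<And>w. w \<in> F \<Longrightarrow> gf (\<mu> - \<nu>) zf \<le> gf (\<mu> - \<nu>) w" using attain[OF cF(1,3)] by blast
    have 1: "hs E \<nu> = gf \<nu> ze" by (rule hs_attain[OF ze])
    have 2: "hs F (\<mu> - \<nu>) = gf (\<mu> - \<nu>) zf" by (rule hs_attain[OF zf])
    have kk: "\<beta> < a1 \<bullet> (fst ze - fst zf)"
      using key[of "fst ze" "snd ze" "fst zf" "snd zf" 0] ze(1) zf(1) True by simp
    have m1: "hs E \<mu> \<le> gf \<mu> ze" by (rule hs_lower[OF cE(1) ze(1)])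
    have m2: "hs F 0 \<le> gf 0 zf" by (rule hs_lower[OF cF(1) zf(1)])
    have "gf \<nu> ze + gf (\<mu> - \<nu>) zf = gf \<mu> ze + gf 0 zf + k * (a1 \<bullet> (fst ze - fst zf))"
      unfolding gf_def \<nu>_def by (simp add: inner_add_left inner_diff_left inner_diff_right algebra_simps)
    moreover have "k * \<beta> < k * (a1 \<bullet> (fst ze - fst zf))" using kk kp by simp
    moreover have "k * \<beta> = \<bar>r - M\<bar> + 1" unfolding k_def using bp by simp
    ultimately have "M + \<bar>r - M\<bar> + 1 < gf \<nu> ze + gf (\<mu> - \<nu>) zf" using m1 m2 unfolding M_def by linarith
    moreover have "r - M \<le> \<bar>r - M\<bar>" by (rule abs_ge_self)
    ultimately have "r < gf \<nu> ze + gf (\<mu> - \<nu>) zf" by linarith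
    then have "r < hs E \<nu> + hs F (\<mu> - \<nu>)" using 1 2 by simp
    then show ?thesis by blast
  qed
qed


lemma n_fold:
  fixes E :: "'s \<Rightarrow> ((real^'n) \<times> real) set"
  assumes "finite S" "S \<noteq> {}" "\<forall>s\<in>S. compact (E s) \<and> convex (E s) \<and> E s \<noteq> {}"
    and "ereal r < Hs (Comb S E) \<mu>"
  shows "\<exists>m. (\<Sum>s\<in>S. m s) = \<mu> \<and> r < (\<Sum>s\<in>S. hs (E s) (m s))"
  using assms
proof (induction S arbitrary: r \<mu> rule: finite_ne_induct)
  case (singleton a)
  then have "ereal r < ereal (hs (E a) \<mu>)" using Hs_hs[of "E a" \<mu>] by (simp add: Comb_single)
  then show ?case by (intro exI[of _ "\<lambda>_. \<mu>"]) simp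
next
  case (insert a S)
  define F where "F = Comb S E"
  have cF: "compact F" "convex F" using Comb_cc[of S E] insert unfolding F_def by auto
  have cE: "compact (E a)" "convex (E a)" "E a \<noteq> {}" using insert by auto
  have rr: "ereal r < Hs (comb (E a) F) \<mu>"
    using insert Comb_insert[of a S E] unfolding F_def by simp
  obtain \<nu> where \<nu>: "ereal (r - hs (E a) \<nu>) < Hs F (\<mu> - \<nu>)"
  proof (cases "F = {}")
    case True
    then have "Hs F (\<mu> - 0) = \<infinity>" unfolding Hs_def by (simp add: top_ereal_def)
    then show ?thesis using that[of 0] by simp
  next
    case False
    obtain \<nu> where "r < hs (E a) \<nu> + hs F (\<mu> - \<nu>)" using two_fold[OF cE cF False rr] by blast
    then have "ereal (r - hs (E a) \<nu>) < Hs F (\<mu> - \<nu>)" using Hs_hs[OF cF(1) False] by simp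
    then show ?thesis using that by blast
  qed
  obtain m where m: "(\<Sum>s\<in>S. m s) = \<mu> - \<nu>" "r - hs (E a) \<nu> < (\<Sum>s\<in>S. hs (E s) (m s))"
    using insert.IH[of "r - hs (E a) \<nu>" "\<mu> - \<nu>"] insert.prems \<nu> unfolding F_def by auto
  define m' where "m' = m(a := \<nu>)"
  have s1: "(\<Sum>s\<in>S. m' s) = (\<Sum>s\<in>S. m s)" unfolding m'_def using insert.hyps by (intro sum.cong) auto
  have s2: "(\<Sum>s\<in>S. hs (E s) (m' s)) = (\<Sum>s\<in>S. hs (E s) (m s))" unfolding m'_def using insert.hyps by (intro sum.cong) auto
  have "(\<Sum>s\<in>insert a S. m' s) = \<mu>" using insert.hyps s1 m(1) by (simp add: m'_def)
  moreover have "r < (\<Sum>s\<in>insert a S. hs (E s) (m' s))" using insert.hyps s2 m(2) by (simp add: m'_def)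
  ultimately show ?case by blast
qed


lemma open_const: "open {x::'a::topological_space. P}" by (cases P) auto

lemma closed_int_coord: "closed {z::(real^'n) \<times> (real^'k). fst z $ j \<in> \<int>}"
proof -
  have "{z::(real^'n) \<times> (real^'k). fst z $ j \<in> \<int>} = (\<lambda>z. fst z $ j) -` \<int>" by auto
  moreover have "closed ((\<lambda>z::(real^'n) \<times> (real^'k). fst z $ j) -` \<int>)"
    by (intro continuous_closed_vimage closed_Ints continuous_intros)
  ultimately show ?thesis by simp
qed

lemma closed_int_coord2: "closed {z::(real^'n) \<times> (real^'k). snd z $ j \<in> \<int>}"
proof -
  have "{z::(real^'n) \<times> (real^'k). snd z $ j \<in> \<int>} = (\<lambda>z. snd z $ j) -` \<int>" by auto
  moreover have "closed ((\<lambda>z::(real^'n) \<times> (real^'k). snd z $ j) -` \<int>)"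
    by (intro continuous_closed_vimage closed_Ints continuous_intros)
  ultimately show ?thesis by simp
qed

lemma Kset_compact:
  assumes "bounded (Kset A b T W h ms JX JY s)"
  shows "compact (Kset A b T W h ms JX JY s)"
proof -
  have eq: "Kset A b T W h ms JX JY s = {z. (\<forall>j. j \<in> JX \<longrightarrow> fst z $ j \<in> \<int>) \<and> (\<forall>j. j \<in> JY \<longrightarrow> snd z $ j \<in> \<int>)
      \<and> (\<forall>i. b $ i \<le> (A *v fst z) $ i) \<and> (\<forall>i. i < ms s \<longrightarrow> h s i \<le> T s i \<bullet> fst z + W s i \<bullet> snd z)}"
    by (auto simp: Kset_def intpart_def)
  have cA: "continuous_on UNIV (\<lambda>z::(real^'a) \<times> (real^'b). (A *v fst z) $ i)" for i
    by (intro continuous_on_compose2[of UNIV "\<lambda>v. v $ i", OF _ continuous_on_compose2[OF matrix_vector_mult_linear_continuous_on continuous_on_fst]]) (auto intro: continuous_intros)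
  have "closed (Kset A b T W h ms JX JY s)"
    unfolding eq
    by (intro closed_Collect_conj closed_Collect_all closed_Collect_imp open_const closed_int_coord closed_int_coord2
        closed_Collect_le cA continuous_intros)
  then show ?thesis using assms compact_eq_bounded_closed by blast
qed


lemma min_scale:
  fixes f :: "'a::topological_space \<Rightarrow> real"
  assumes "compact K" "K \<noteq> {}" "continuous_on K f" "p > 0"
  shows "p * Inf (f ` K) = Inf ((\<lambda>z. p * f z) ` K)"
proof -
  obtain z0 where z0: "z0 \<in> K" "\<And>w. w \<in> K \<Longrightarrow> f z0 \<le> f w"
    using continuous_attains_inf[OF assms(1-3)] by blast
  have "Inf (f ` K) = f z0" by (rule cInf_eq_minimum) (use z0 in auto)
  moreover have "Inf ((\<lambda>z. p * f z) ` K) = p * f z0"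
    by (rule cInf_eq_minimum) (use z0 assms(4) in auto)
  ultimately show ?thesis by simp
qed

lemma hull_inf:
  assumes "compact G" "G \<noteq> {}"
  shows "Inf (gf \<nu> ` (convex hull G)) = Inf (gf \<nu> ` G)"
proof -
  obtain g0 where g0: "g0 \<in> G" "\<And>w. w \<in> G \<Longrightarrow> gf \<nu> g0 \<le> gf \<nu> w" using attain[OF assms] by blast
  have "G \<subseteq> {z. inner (\<nu>, 1::real) z \<ge> gf \<nu> g0}" using g0 by (auto simp: gf_inner)
  then have "convex hull G \<subseteq> {z. inner (\<nu>, 1::real) z \<ge> gf \<nu> g0}"
    by (rule hull_minimal) (rule convex_halfspace_ge)
  then have h: "\<And>w. w \<in> convex hull G \<Longrightarrow> gf \<nu> g0 \<le> gf \<nu> w" by (auto simp: gf_inner)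
  have "Inf (gf \<nu> ` (convex hull G)) = gf \<nu> g0"
    by (rule cInf_eq_minimum) (use h g0(1) hull_inc[of g0 G] in auto)
  moreover have "Inf (gf \<nu> ` G) = gf \<nu> g0"
    by (rule cInf_eq_minimum) (use g0 in auto)
  ultimately show ?thesis by simp
qed

lemma E_in_P:
  fixes K :: "((real^'n) \<times> (real^'ny)) set"
  assumes "compact K" "K \<noteq> {}" "p > 0" "\<pi>0 \<ge> 0"
    and "(x,t) \<in> convex hull ((\<lambda>(x,y). (x, p * (q \<bullet> y))) ` K)"
  shows "Inf ((\<lambda>(x,y). \<pi> \<bullet> x + \<pi>0 * (q \<bullet> y)) ` K) \<le> \<pi> \<bullet> x + \<pi>0 * (t / p)"
proof -
  let ?f = "(\<lambda>(x,y). \<pi> \<bullet> x + \<pi>0 * (q \<bullet> y))"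
  let ?Q = "Inf (?f ` K)"
  have cf: "continuous_on K ?f" unfolding case_prod_unfold by (intro continuous_intros)
  have bdd: "bdd_below (?f ` K)"
    by (rule bounded_imp_bdd_below[OF compact_imp_bounded[OF compact_continuous_image[OF cf assms(1)]]])
  have lb: "?Q \<le> ?f k" if "k \<in> K" for k using cInf_lower[OF imageI[OF that] bdd] .
  let ?w = "(\<pi>, \<pi>0 / p)"
  have "(\<lambda>(x,y). (x, p * (q \<bullet> y))) ` K \<subseteq> {z. inner ?w z \<ge> ?Q}"
  proof
    fix z assume "z \<in> (\<lambda>(x,y). (x, p * (q \<bullet> y))) ` K"
    then obtain x' y' where "(x',y') \<in> K" "z = (x', p * (q \<bullet> y'))" by auto
    moreover have "inner ?w (x', p * (q \<bullet> y')) = ?f (x', y')" using assms(3) by (simp add: inner_prod_def)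
    ultimately show "z \<in> {z. inner ?w z \<ge> ?Q}" using lb by fastforce
  qed
  then have "convex hull ((\<lambda>(x,y). (x, p * (q \<bullet> y))) ` K) \<subseteq> {z. inner ?w z \<ge> ?Q}"
    by (rule hull_minimal) (rule convex_halfspace_ge)
  then have "?Q \<le> inner ?w (x,t)" using assms(5) by blast
  then show ?thesis by (simp add: inner_prod_def)
qed

theorem theorem2:
  fixes c :: "real^'n" and A :: "real^'n^'m" and b :: "real^'m"
    and S :: "'s set" and p :: "'s \<Rightarrow> real"
    and T :: "'s \<Rightarrow> nat \<Rightarrow> real^'n" and W :: "'s \<Rightarrow> nat \<Rightarrow> real^'ny"
    and h :: "'s \<Rightarrow> nat \<Rightarrow> real" and ms :: "'s \<Rightarrow> nat"
    and q :: "'s \<Rightarrow> real^'ny" and JX :: "'n set" and JY :: "'ny set"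
  assumes "finite S"
    and "\<forall>s\<in>S. p s > 0" and "(\<Sum>s\<in>S. p s) = 1"
    and "\<forall>j. c $ j \<in> \<rat>" and "\<forall>i j. A $ i $ j \<in> \<rat>" and "\<forall>i. b $ i \<in> \<rat>"
    and "\<forall>s\<in>S. \<forall>i<ms s. (\<forall>j. T s i $ j \<in> \<rat>) \<and> (\<forall>j. W s i $ j \<in> \<rat>) \<and> h s i \<in> \<rat>"
    and "\<forall>s\<in>S. \<forall>j. q s $ j \<in> \<rat>"
    and "\<forall>s\<in>S. Kset A b T W h ms JX JY s \<noteq> {}"
    and "\<forall>s\<in>S. bounded (Kset A b T W h ms JX JY s)"
  shows "zLC c p S (Kset A b T W h ms JX JY) q = zD c p S (Kset A b T W h ms JX JY) q"
proof -
  note assms' = assms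
  define K where "K = Kset A b T W h ms JX JY"
  have Kc: "compact (K s)" "K s \<noteq> {}" if "s \<in> S" for s
  proof -
    show "compact (K s)" unfolding K_def using Kset_compact[of A b T W h ms JX JY s] assms(10) that by blast
    show "K s \<noteq> {}" unfolding K_def using assms(9) that by blast
  qed
  define G where "G s = (\<lambda>(x,y). (x, p s * (q s \<bullet> y))) ` K s" for s
  define EE where "EE s = convex hull (G s)" for s
  have Gc: "compact (G s)" "G s \<noteq> {}" if "s \<in> S" for s
  proof -
    have "continuous_on (K s) (\<lambda>(x,y). (x, p s * (q s \<bullet> y)))"
      unfolding case_prod_unfold by (intro continuous_intros)
    then show "compact (G s)" unfolding G_def using compact_continuous_image Kc[OF that] by blast
    show "G s \<noteq> {}" unfolding G_def using Kc[OF that] by blast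
  qed
  have EEc: "\<forall>s\<in>S. compact (EE s) \<and> convex (EE s) \<and> EE s \<noteq> {}"
    using Gc unfolding EE_def by (auto intro: compact_convex_hull convex_convex_hull)
  have pS: "\<And>s. s \<in> S \<Longrightarrow> p s > 0" using assms(2) by blast
  have Sne: "S \<noteq> {}" using assms(3) by auto
  have weak: "zD c p S K q \<le> zLC c p S K q"
    unfolding zD_def zLC_def
  proof (rule SUP_least, rule INF_greatest)
    fix lam :: "'s \<Rightarrow> real^'n" and z :: "(real^'n) \<times> ('s \<Rightarrow> real)"
    assume lam: "lam \<in> {lam. (\<Sum>s\<in>S. p s *\<^sub>R lam s) = 0}"
      and z: "z \<in> {(x, \<theta>). \<forall>s\<in>S. (x, \<theta> s) \<in> Pset K q s (UNIV \<times> {0..})}"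
    obtain x \<theta> where z': "z = (x, \<theta>)" by (cases z)
    have P: "\<forall>s\<in>S. (x, \<theta> s) \<in> Pset K q s (UNIV \<times> {0..})" using z z' by auto
    have each: "Inf ((\<lambda>(x, y). c \<bullet> x + q s \<bullet> y + lam s \<bullet> x) ` K s) \<le> (c + lam s) \<bullet> x + \<theta> s"
      if "s \<in> S" for s
    proof -
      have "Qstar K q s (c + lam s) 1 \<le> (c + lam s) \<bullet> x + 1 * \<theta> s"
      proof -
        have "\<forall>xa. \<forall>y\<in>{0..}. Qstar K q s xa y \<le> xa \<bullet> x + y * \<theta> s"
          using P that unfolding Pset_def by auto
        then have "Qstar K q s (c + lam s) 1 \<le> (c + lam s) \<bullet> x + 1 * \<theta> s" by fastforce
        then show ?thesis by simp
      qed
      moreover have "Qstar K q s (c + lam s) 1 = Inf ((\<lambda>(x, y). c \<bullet> x + q s \<bullet> y + lam s \<bullet> x) ` K s)"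
        unfolding Qstar_def by (rule arg_cong[where f=Inf], rule image_cong) (auto simp: inner_add_left)
      ultimately show ?thesis by simp
    qed
    have "zlam c p S K q lam \<le> (\<Sum>s\<in>S. p s * ((c + lam s) \<bullet> x + \<theta> s))"
      unfolding zlam_def using each pS by (intro sum_mono mult_left_mono) (auto simp: less_imp_le)
    also have "\<dots> = (\<Sum>s\<in>S. p s) * (c \<bullet> x) + (\<Sum>s\<in>S. p s *\<^sub>R lam s) \<bullet> x + (\<Sum>s\<in>S. p s * \<theta> s)"
      by (simp add: inner_add_left distrib_left sum.distrib sum_distrib_right inner_sum_left)
    also have "\<dots> = c \<bullet> x + (\<Sum>s\<in>S. p s * \<theta> s)" using lam assms(3) by simp
    finally show "ereal (zlam c p S K q lam) \<le> ereal (c \<bullet> fst z + (\<Sum>s\<in>S. p s * snd z s))"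
      using z' by simp
  qed
  \<comment> \<open>zLC below convexified primal\<close>
  have step1: "zLC c p S K q \<le> Hs (Comb S EE) c"
    unfolding Hs_def
  proof (rule INF_greatest)
    fix w assume "w \<in> Comb S EE"
    then obtain x t where w: "w = (x, sum t S)" "\<forall>s\<in>S. (x, t s) \<in> EE s" unfolding Comb_mem by blast
    have feas: "(x, \<lambda>s. t s / p s) \<in> {(x, \<theta>). \<forall>s\<in>S. (x, \<theta> s) \<in> Pset K q s (UNIV \<times> {0..})}"
    proof -
      have "(x, t s / p s) \<in> Pset K q s (UNIV \<times> {0..})" if "s \<in> S" for s
      proof -
        have "Qstar K q s \<pi> \<pi>0 \<le> \<pi> \<bullet> x + \<pi>0 * (t s / p s)" if "\<pi>0 \<ge> 0" for \<pi> \<pi>0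
          unfolding Qstar_def
          using E_in_P[OF Kc[OF \<open>s \<in> S\<close>] pS[OF \<open>s \<in> S\<close>] that, of x "t s" "q s" \<pi>] w(2) \<open>s \<in> S\<close>
          unfolding EE_def G_def by blast
        then show ?thesis unfolding Pset_def by auto
      qed
      then show ?thesis by auto
    qed
    have "(\<Sum>s\<in>S. p s * (t s / p s)) = sum t S"
      using pS by (intro sum.cong) (simp_all, metis less_irrefl)
    then have "zLC c p S K q \<le> ereal (c \<bullet> x + sum t S)"
      unfolding zLC_def using INF_lower[OF feas, of "\<lambda>z. ereal (c \<bullet> fst z + (\<Sum>s\<in>S. p s * snd z s))"] by simp
    then show "zLC c p S K q \<le> ereal (gf c w)" using w(1) by (simp add: gf_def)
  qed
  have step2: "Hs (Comb S EE) c \<le> zD c p S K q"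
  proof (rule dense_le)
    fix y assume y: "y < Hs (Comb S EE) c"
    show "y \<le> zD c p S K q"
    proof (cases y)
      case (real r)
      then obtain m where m: "(\<Sum>s\<in>S. m s) = c" "r < (\<Sum>s\<in>S. hs (EE s) (m s))"
        using n_fold[OF assms(1) Sne EEc, of r c] y by auto
      define lam where "lam s = (1 / p s) *\<^sub>R m s - c" for s
      have "(\<Sum>s\<in>S. p s *\<^sub>R lam s) = (\<Sum>s\<in>S. m s - p s *\<^sub>R c)"
        using pS by (intro sum.cong) (simp_all add: lam_def scaleR_right_diff_distrib, metis less_irrefl)
      also have "\<dots> = c - (\<Sum>s\<in>S. p s) *\<^sub>R c" by (simp add: sum_subtractf scaleR_sum_left m(1))
      finally have lamf: "lam \<in> {lam. (\<Sum>s\<in>S. p s *\<^sub>R lam s) = 0}" using assms(3) by simp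
      have eqs: "p s * Inf ((\<lambda>(x, y). c \<bullet> x + q s \<bullet> y + lam s \<bullet> x) ` K s) = hs (EE s) (m s)"
        if "s \<in> S" for s
      proof -
        have ps: "p s > 0" using pS[OF that] .
        have "hs (EE s) (m s) = Inf (gf (m s) ` G s)"
          unfolding hs_def EE_def by (rule hull_inf[OF Gc[OF that]])
        also have "\<dots> = Inf ((\<lambda>(x,y). m s \<bullet> x + p s * (q s \<bullet> y)) ` K s)"
          unfolding G_def image_image by (rule arg_cong[where f=Inf], rule image_cong) (auto simp: gf_def)
        also have "\<dots> = Inf ((\<lambda>z. p s * (\<lambda>(x, y). c \<bullet> x + q s \<bullet> y + lam s \<bullet> x) z) ` K s)"
          using ps by (intro arg_cong[where f=Inf] image_cong)
             (auto simp: lam_def inner_diff_left inner_scaleR_left algebra_simps)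
        also have "\<dots> = p s * Inf ((\<lambda>(x, y). c \<bullet> x + q s \<bullet> y + lam s \<bullet> x) ` K s)"
          by (rule min_scale[symmetric, OF Kc[OF that] _ ps]) (unfold case_prod_unfold, intro continuous_intros)
        finally show ?thesis by simp
      qed
      have "zlam c p S K q lam = (\<Sum>s\<in>S. hs (EE s) (m s))"
        unfolding zlam_def using eqs by (intro sum.cong) auto
      then have "y \<le> ereal (zlam c p S K q lam)" using real m(2) by simp
      then show ?thesis unfolding zD_def using lamf by (blast intro: SUP_upper2)
    next
      case PInf then show ?thesis using y by simp
    next
      case MInf then show ?thesis by simp
    qed
  qed
  show ?thesis using weak step1 step2 unfolding K_def by (meson order.trans antisym)
qed

end
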